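(* Let $f:\{0,1\}^n\to\{0,1\}$ be $\varepsilon$-far from every $k$-junta. Then the unitary $U_f=\mathrm{diag}\big((-1)^{f(x)}\big)_{x\in\{0,1\}^n}$ is $\sqrt{\varepsilon/2}$-far from every quantum $k$-junta, i.e. $\mathrm{dist}(U_f,V)\ge\sqrt{\varepsilon/2}$ for every quantum $k$-junta $V\in\mathcal{U}_N$.
   Context: $N=2^n$, $\mathcal{U}_N$ is the set of $N\times N$ unitaries. A Boolean function is a $k$-junta if it depends on at most... precisely: $f(x)=g(x_{i_1},\dots,x_{i_k})$ for some $g:\{0,1\}^k\to\{0,1\}$ and fixed indices; $f$ is $\varepsilon$-far from every $k$-junta if $\Pr_{x\sim\{0,1\}^n}[f(x)\ne g(x)]\ge\varepsilon$ for every $k$-junta $g$ ($x$ uniform). A unitary $U\in\mathcal{U}_N$ is a quantum $k$-junta if $U=V_S\otimes I_{\overline{S}}$ for some $S\subseteq[n]$ with $|S|=k$ and $V_S\in\mathcal{U}_{2^k}$ acting on the qubits in $S$. For $A,B\in\mathbb{C}^{N\times N}$, $\mathrm{dist}(A,B):=\min_{\theta\in[0,2\pi)}\frac{1}{\sqrt{2N}}\|e^{i\theta}A-B\|$ with $\|\cdot\|$ the Frobenius norm. *)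

theory Defs
  imports "HOL-Analysis.Analysis" "Jordan_Normal_Form.Matrix"
begin

(* Basis states of n qubits / points of {0,1}^n are encoded as natural numbers
   x < 2^n; the i-th bit (i < n) of x is  bit x i. *)

definition cadj :: "complex mat \<Rightarrow> complex mat" where
  "cadj A = mat (dim_col A) (dim_row A) (\<lambda>(i,j). cnj (A $$ (j,i)))"

definition unitary_mat :: "nat \<Rightarrow> complex mat \<Rightarrow> bool" where
  "unitary_mat m U \<longleftrightarrow> U \<in> carrier_mat m m \<and> cadj U * U = 1\<^sub>m m \<and> U * cadj U = 1\<^sub>m m"

definition frob_norm :: "complex mat \<Rightarrow> real" where
  "frob_norm A = sqrt (\<Sum>i<dim_row A. \<Sum>j<dim_col A. (cmod (A $$ (i,j)))\<^sup>2)"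

(* dist(A,B) = min_{theta in [0,2pi)} ||e^{i theta} A - B|| / sqrt(2N), N = dimension;
   the minimum exists by compactness, so it equals the infimum. *)
definition qdist :: "complex mat \<Rightarrow> complex mat \<Rightarrow> real" where
  "qdist A B = (INF \<theta>\<in>{0..<2*pi}.
      frob_norm (exp (\<i> * complex_of_real \<theta>) \<cdot>\<^sub>m A - B) / sqrt (2 * real (dim_row A)))"

definition is_junta :: "nat \<Rightarrow> nat \<Rightarrow> (nat \<Rightarrow> bool) \<Rightarrow> bool" where
  "is_junta n k h \<longleftrightarrow> (\<exists>is :: nat list. \<exists>g :: bool list \<Rightarrow> bool.
      length is = k \<and> set is \<subseteq> {..<n} \<and> (\<forall>x<2^n. h x = g (map (bit x) is)))"

definition disagree_prob :: "nat \<Rightarrow> (nat \<Rightarrow> bool) \<Rightarrow> (nat \<Rightarrow> bool) \<Rightarrow> real" where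
  "disagree_prob n f h = real (card {x. x < 2^n \<and> f x \<noteq> h x}) / 2^n"

definition far_from_juntas :: "nat \<Rightarrow> nat \<Rightarrow> real \<Rightarrow> (nat \<Rightarrow> bool) \<Rightarrow> bool" where
  "far_from_juntas n k \<epsilon> f \<longleftrightarrow> (\<forall>h. is_junta n k h \<longrightarrow> disagree_prob n f h \<ge> \<epsilon>)"

definition phase_oracle :: "nat \<Rightarrow> (nat \<Rightarrow> bool) \<Rightarrow> complex mat" where
  "phase_oracle n f = mat (2^n) (2^n) (\<lambda>(x,y). if x = y then (if f x then -1 else 1) else 0)"

(* index in {0,..,2^|S|-1} of the restriction of basis state x to the qubits in S
   (qubits of S taken in increasing order) *)
definition restr_idx :: "nat set \<Rightarrow> nat \<Rightarrow> nat" where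
  "restr_idx S x = (\<Sum>j<card S. if bit x (sorted_list_of_set S ! j) then 2^j else 0)"

(* V_S \<otimes> I_{complement S} on n qubits: <x| V_S \<otimes> I |y> =
   <x_S|V|y_S> * [x_{complement S} = y_{complement S}] *)
definition embed_on :: "nat \<Rightarrow> nat set \<Rightarrow> complex mat \<Rightarrow> complex mat" where
  "embed_on n S V = mat (2^n) (2^n) (\<lambda>(x,y).
      if (\<forall>i\<in>{..<n} - S. bit x i = bit y i) then V $$ (restr_idx S x, restr_idx S y) else 0)"

definition quantum_junta :: "nat \<Rightarrow> nat \<Rightarrow> complex mat \<Rightarrow> bool" where
  "quantum_junta n k U \<longleftrightarrow> (\<exists>S V. S \<subseteq> {..<n} \<and> card S = k \<and> unitary_mat (2^k) V
      \<and> U = embed_on n S V)"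

end

theory Submission
  imports Defs
begin

lemma key_ineq:
  fixes c d :: complex and s :: real
  assumes c1: "cmod c = 1" and s: "s = 1 \<or> s = -1" and sr: "s * Re (cnj c * d) \<le> 0"
  shows "1 \<le> (cmod (c * complex_of_real s - d))\<^sup>2"
proof -
  have cc: "cnj c * c = 1"
    using complex_norm_square[of c] c1 by (simp add: mult.commute)
  have "cmod (c * complex_of_real s - d) = cmod (cnj c * (c * complex_of_real s - d))"
    by (simp add: norm_mult c1)
  also have "cnj c * (c * complex_of_real s - d) = complex_of_real s - cnj c * d"
    using cc by (simp add: algebra_simps)
  finally have e0: "cmod (c * complex_of_real s - d) = cmod (complex_of_real s - cnj c * d)" .
  have e: "(cmod (c * complex_of_real s - d))\<^sup>2 = (s - Re (cnj c * d))\<^sup>2 + (Im (cnj c * d))\<^sup>2"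
    unfolding e0 cmod_power2 by (simp, rule power2_commute)
  have a: "1 \<le> \<bar>s - Re (cnj c * d)\<bar>"
    using s sr by (elim disjE) (simp_all add: abs_if)
  have "1 \<le> \<bar>s - Re (cnj c * d)\<bar> ^ 2"
    by (rule one_le_power[OF a])
  then have "1 \<le> (s - Re (cnj c * d))\<^sup>2" by (simp only: power2_abs)
  moreover have "0 \<le> (Im (cnj c * d))\<^sup>2" by (rule zero_le_power2)
  ultimately show ?thesis unfolding e by linarith
qed

theorem mainTheorem3:
  fixes n k :: nat and \<epsilon> :: real and f :: "nat \<Rightarrow> bool"
  assumes "far_from_juntas n k \<epsilon> f"
  shows "\<forall>V. unitary_mat (2^n) V \<and> quantum_junta n k V \<longrightarrow>
           qdist (phase_oracle n f) V \<ge> sqrt (\<epsilon> / 2)"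
proof (intro allI impI)
  fix V assume VV: "unitary_mat (2^n) V \<and> quantum_junta n k V"
  then obtain S V0 where S: "S \<subseteq> {..<n}" "card S = k" and Veq: "V = embed_on n S V0"
    unfolding quantum_junta_def by blast
  have Vc: "V \<in> carrier_mat (2^n) (2^n)" using VV unfolding unitary_mat_def by blast
  have finS: "finite S" using S(1) finite_subset by blast
  define N :: nat where "N = 2^n"
  have Npos: "(0::real) < real N" unfolding N_def by simp
  have bound: "sqrt (\<epsilon> / 2) \<le> frob_norm (exp (\<i> * complex_of_real \<theta>) \<cdot>\<^sub>m phase_oracle n f - V)
        / sqrt (2 * real (dim_row (phase_oracle n f)))" for \<theta>
  proof -
    define c where "c = exp (\<i> * complex_of_real \<theta>)"
    have c1: "cmod c = 1" unfolding c_def by (simp add: norm_exp_i_times)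
    define A where "A = c \<cdot>\<^sub>m phase_oracle n f - V"
    have dimA: "dim_row A = N" "dim_col A = N"
      unfolding A_def N_def phase_oracle_def using Vc by auto
    have Aii: "A $$ (x,x) = c * complex_of_real (if f x then -1 else 1) - V $$ (x,x)" if "x < N" for x
      unfolding A_def N_def phase_oracle_def using that Vc by (auto simp: N_def)
    define h where "h x = (Re (cnj c * V $$ (x,x)) < 0)" for x
    define ix where "ix = sorted_list_of_set S"
    define idx where "idx l = (\<Sum>j<length l. if l ! j then 2^j else 0 :: nat)" for l :: "bool list"
    define g where "g l = (Re (cnj c * V0 $$ (idx l, idx l)) < 0)" for l
    have lis: "length ix = k" using S finS by (simp add: ix_def)
    have junta: "is_junta n k h"
      unfolding is_junta_def
    proof (intro exI conjI allI impI)
      show "length ix = k" by (rule lis)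
      show "set ix \<subseteq> {..<n}" using S finS by (simp add: ix_def)
      fix x :: nat assume x: "x < 2^n"
      have "restr_idx S x = idx (map (bit x) ix)"
        unfolding restr_idx_def idx_def using lis S by (simp add: ix_def)
      moreover have "V $$ (x,x) = V0 $$ (restr_idx S x, restr_idx S x)"
        unfolding Veq embed_on_def using x by simp
      ultimately show "h x = g (map (bit x) ix)" unfolding h_def g_def by simp
    qed
    define D where "D = {x. x < 2^n \<and> f x \<noteq> h x}"
    have epsD: "\<epsilon> * real N \<le> real (card D)"
      using assms junta unfolding far_from_juntas_def disagree_prob_def D_def N_def
      by (simp add: pos_le_divide_eq)
    have DN: "D \<subseteq> {..<N}" unfolding D_def N_def by auto
    have "real (card D) = (\<Sum>x\<in>D. 1)" by simp
    also have "\<dots> \<le> (\<Sum>x\<in>D. (cmod (A $$ (x,x)))\<^sup>2)"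
    proof (rule sum_mono)
      fix x assume xD: "x \<in> D"
      then have xN: "x < N" using DN by auto
      show "1 \<le> (cmod (A $$ (x,x)))\<^sup>2"
        unfolding Aii[OF xN]
        by (rule key_ineq[OF c1]) (use xD in \<open>auto simp: D_def h_def\<close>)
    qed
    also have "\<dots> \<le> (\<Sum>x<N. (cmod (A $$ (x,x)))\<^sup>2)"
      by (rule sum_mono2) (use DN in auto)
    also have "\<dots> \<le> (\<Sum>i<N. \<Sum>j<N. (cmod (A $$ (i,j)))\<^sup>2)"
      by (rule sum_mono) (rule member_le_sum, auto)
    finally have "\<epsilon> * real N \<le> (\<Sum>i<N. \<Sum>j<N. (cmod (A $$ (i,j)))\<^sup>2)" using epsD by linarith
    then have fr: "sqrt (\<epsilon> * real N) \<le> frob_norm A"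
      unfolding frob_norm_def dimA by simp
    have dr: "dim_row (phase_oracle n f) = N" unfolding phase_oracle_def N_def by simp
    have "sqrt (\<epsilon> / 2) = sqrt (\<epsilon> * real N) / sqrt (2 * real N)"
      using Npos by (simp add: real_sqrt_divide[symmetric])
    also have "\<dots> \<le> frob_norm A / sqrt (2 * real N)"
      using fr Npos by (simp add: divide_right_mono)
    finally show ?thesis unfolding A_def c_def dr .
  qed
  show "qdist (phase_oracle n f) V \<ge> sqrt (\<epsilon> / 2)"
    unfolding qdist_def
    by (rule cINF_greatest) (use bound pi_gt_zero in auto)
qed

end
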